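(* Let $\rho,\sigma,\alpha\in\mathbb{F}\setminus\{\frac12\}$, and let $\mathbf{A}$ be the 5-dimensional LV algebra with natural basis $e_1,\dots,e_5$ in which $e_1e_2=\rho e_1+(1-\rho)e_2$, $e_2e_3=\sigma e_2+(1-\sigma)e_3$, $e_3e_4=\alpha e_3+(1-\alpha)e_4$, $e_3e_5=\alpha e_3+(1-\alpha)e_5$, and $e_ie_j=\frac12(e_i+e_j)$ for all other pairs $i,j$. Then $\mathrm{Der}(\mathbf{A})=\{f\in L(\mathbf{A}) : f(e_1)=f(e_2)=f(e_3)=0 \text{ and } \mathrm{Im}(f)\subseteq\langle e_4-e_5\rangle\}$.
   Context: Let $\mathbb{F}$ be a field of characteristic different from $2$. A Lotka–Volterra (LV) algebra of dimension $5$ over $\mathbb{F}$ is a commutative (not necessarily associative) $\mathbb{F}$-algebra $\mathbf{A}$ with a basis $e_1,\dots,e_5$ (the natural basis) such that $e_ie_j=\alpha_{ij}e_i+\alpha_{ji}e_j$ with $\alpha_{ij}\in\mathbb{F}$, $\alpha_{ii}=\frac12$ and $\alpha_{ij}+\alpha_{ji}=1$ for all $i,j$. A derivation is a linear map $D:\mathbf{A}\to\mathbf{A}$ with $D(uv)=D(u)v+uD(v)$ for all $u,v$; $\mathrm{Der}(\mathbf{A})$ is the set of derivations, $L(\mathbf{A})$ the set of linear maps $\mathbf{A}\to\mathbf{A}$, and $\langle x_1,\dots,x_k\rangle$ the linear span. *)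

theory Defs
  imports Main
begin

definition Vsp :: "(nat \<Rightarrow> 'a::field) set" where
  "Vsp = {v. \<forall>i. i \<notin> {1..5} \<longrightarrow> v i = 0}"

definition ebas :: "nat \<Rightarrow> nat \<Rightarrow> 'a::field" where
  "ebas i = (\<lambda>k. if k = i then 1 else 0)"

text \<open>Product of the LV algebra with structure constants alpha (e_i e_j = alpha i j e_i + alpha j i e_j),
  extended bilinearly: (uv)_k = sum_j alpha k j (u_k v_j + u_j v_k).\<close>
definition lv_mult :: "(nat \<Rightarrow> nat \<Rightarrow> 'a::field) \<Rightarrow> (nat \<Rightarrow> 'a) \<Rightarrow> (nat \<Rightarrow> 'a) \<Rightarrow> nat \<Rightarrow> 'a" where
  "lv_mult al u v = (\<lambda>k. if k \<in> {1..5} then (\<Sum>j=1..5. al k j * (u k * v j + u j * v k)) else 0)"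

definition is_LV :: "(nat \<Rightarrow> nat \<Rightarrow> 'a::field) \<Rightarrow> bool" where
  "is_LV al \<longleftrightarrow> (\<forall>i\<in>{1..5}. \<forall>j\<in>{1..5}. al i j + al j i = 1) \<and> (\<forall>i\<in>{1..5}. al i i = 1/2)"

definition lin_map :: "((nat \<Rightarrow> 'a::field) \<Rightarrow> (nat \<Rightarrow> 'a)) \<Rightarrow> bool" where
  "lin_map f \<longleftrightarrow> (\<forall>v\<in>Vsp. f v \<in> Vsp) \<and>
     (\<forall>u\<in>Vsp. \<forall>v\<in>Vsp. f (\<lambda>k. u k + v k) = (\<lambda>k. f u k + f v k)) \<and>
     (\<forall>c. \<forall>v\<in>Vsp. f (\<lambda>k. c * v k) = (\<lambda>k. c * f v k))"

definition is_derivation :: "(nat \<Rightarrow> nat \<Rightarrow> 'a::field) \<Rightarrow> ((nat \<Rightarrow> 'a) \<Rightarrow> (nat \<Rightarrow> 'a)) \<Rightarrow> bool" where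
  "is_derivation al f \<longleftrightarrow> lin_map f \<and>
     (\<forall>u\<in>Vsp. \<forall>v\<in>Vsp. f (lv_mult al u v) = (\<lambda>k. lv_mult al (f u) v k + lv_mult al u (f v) k))"

definition al7 :: "'a::field \<Rightarrow> 'a \<Rightarrow> 'a \<Rightarrow> nat \<Rightarrow> nat \<Rightarrow> 'a" where
  "al7 \<rho> \<sigma> \<alpha> i j =
     (if (i, j) = (1, 2) then \<rho> else if (i, j) = (2, 1) then 1 - \<rho>
      else if (i, j) = (2, 3) then \<sigma> else if (i, j) = (3, 2) then 1 - \<sigma>
      else if (i, j) = (3, 4) then \<alpha> else if (i, j) = (4, 3) then 1 - \<alpha>
      else if (i, j) = (3, 5) then \<alpha> else if (i, j) = (5, 3) then 1 - \<alpha>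
      else 1/2)"

end

theory Submission imports Defs begin

lemma sum15: "sum g {1..5::nat} = g 1 + g 2 + g 3 + g 4 + g 5"
  by (simp add: eval_nat_numeral atLeastAtMostSuc_conv add.commute add.left_commute)

lemma sum15': "sum g {Suc 0..5::nat} = g 1 + g 2 + g 3 + g 4 + g 5"
  using sum15 by simp
lemma ebas_apply: "ebas i k = (if k = i then 1 else 0)" by (simp add: ebas_def)

lemma ebas_Vsp: "i \<in> {1..5} \<Longrightarrow> ebas i \<in> Vsp"
  by (auto simp: ebas_def Vsp_def)

lemma lin_add: "lin_map f \<Longrightarrow> u \<in> Vsp \<Longrightarrow> v \<in> Vsp \<Longrightarrow> f (\<lambda>k. u k + v k) = (\<lambda>k. f u k + f v k)"
  unfolding lin_map_def by blast
lemma lin_smult: "lin_map f \<Longrightarrow> v \<in> Vsp \<Longrightarrow> f (\<lambda>k. c * v k) = (\<lambda>k. c * f v k)"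
  unfolding lin_map_def by blast
lemma lin_Vsp: "lin_map f \<Longrightarrow> v \<in> Vsp \<Longrightarrow> f v \<in> Vsp"
  unfolding lin_map_def by blast

lemma lin_zero: "lin_map f \<Longrightarrow> f (\<lambda>k. 0) = (\<lambda>k. 0)"
proof -
  assume "lin_map f"
  moreover have "(\<lambda>k. 0::'a) \<in> Vsp" by (simp add: Vsp_def)
  ultimately show ?thesis using lin_smult[of f "\<lambda>k. 0" 0] by simp
qed

lemma lin_sum:
  assumes L: "lin_map f" and S: "finite S" "S \<subseteq> {1..5}"
  shows "f (\<lambda>k. \<Sum>i\<in>S. w i * ebas i k) = (\<lambda>k. \<Sum>i\<in>S. w i * f (ebas i) k)"
  using S
proof (induction S rule: finite_induct)
  case empty then show ?case using lin_zero[OF L] by simp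
next
  case (insert x F)
  have x: "x \<in> {1..5}" using insert by auto
  have A: "(\<lambda>k. w x * ebas x k) \<in> Vsp" using x by (auto simp: ebas_def Vsp_def)
  have B: "(\<lambda>k. \<Sum>i\<in>F. w i * ebas i k) \<in> Vsp" using insert by (force simp: ebas_def Vsp_def intro!: sum.neutral)
  have "f (\<lambda>k. \<Sum>i\<in>insert x F. w i * ebas i k) = f (\<lambda>k. (\<lambda>k. w x * ebas x k) k + (\<lambda>k. \<Sum>i\<in>F. w i * ebas i k) k)"
    using insert by simp
  also have "\<dots> = (\<lambda>k. f (\<lambda>k. w x * ebas x k) k + f (\<lambda>k. \<Sum>i\<in>F. w i * ebas i k) k)"
    using lin_add[OF L A B] .
  also have "f (\<lambda>k. w x * ebas x k) = (\<lambda>k. w x * f (ebas x) k)"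
    using lin_smult[OF L ebas_Vsp[OF x]] .
  finally show ?case using insert by simp
qed

lemma Vsp_decomp: "v \<in> Vsp \<Longrightarrow> v = (\<lambda>k. \<Sum>i\<in>{1..5}. v i * ebas i k)"
proof (rule ext)
  fix k assume "v \<in> Vsp"
  have "(\<Sum>i\<in>{1..5}. v i * ebas i k) = (\<Sum>i\<in>{1..5}. if i = k then v k else 0)"
    by (rule sum.cong) (auto simp: ebas_def)
  also have "\<dots> = v k" using \<open>v \<in> Vsp\<close> by (auto simp: Vsp_def)
  finally show "v k = (\<Sum>i\<in>{1..5}. v i * ebas i k)" by simp
qed

lemma lin_apply: "lin_map f \<Longrightarrow> v \<in> Vsp \<Longrightarrow> f v = (\<lambda>k. \<Sum>i\<in>{1..5}. v i * f (ebas i) k)"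
  using lin_sum[of f "{1..5}" v] Vsp_decomp[of v] by auto

lemma lv_Vsp: "lv_mult al u v \<in> Vsp" by (simp add: lv_mult_def Vsp_def)

lemma deq:
  assumes "is_derivation al f" "i \<in> {1..5}" "j \<in> {1..5}"
  shows "(\<Sum>m\<in>{1..5}. lv_mult al (ebas i) (ebas j) m * f (ebas m) k) = lv_mult al (f (ebas i)) (ebas j) k + lv_mult al (ebas i) (f (ebas j)) k"
proof -
  have L: "lin_map f" using assms unfolding is_derivation_def by blast
  have "f (lv_mult al (ebas i) (ebas j)) = (\<lambda>k. lv_mult al (f (ebas i)) (ebas j) k + lv_mult al (ebas i) (f (ebas j)) k)"
    using assms ebas_Vsp unfolding is_derivation_def by blast
  then show ?thesis using lin_apply[OF L lv_Vsp, of al "ebas i" "ebas j"] by metis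
qed

lemma der_facts:
  fixes \<rho> \<sigma> \<alpha> :: "'a::field"
  assumes D: "is_derivation (al7 \<rho> \<sigma> \<alpha>) f" and two: "(2::'a) \<noteq> 0"
    and r: "\<rho> \<noteq> 1/2" and s: "\<sigma> \<noteq> 1/2" and a: "\<alpha> \<noteq> 1/2"
  shows "f (ebas 1) 1 = 0 \<and> f (ebas 1) 2 = 0 \<and> f (ebas 1) 3 = 0 \<and> f (ebas 1) 4 = 0 \<and> f (ebas 1) 5 = 0 \<and>
         f (ebas 2) 1 = 0 \<and> f (ebas 2) 2 = 0 \<and> f (ebas 2) 3 = 0 \<and> f (ebas 2) 4 = 0 \<and> f (ebas 2) 5 = 0 \<and>
         f (ebas 3) 1 = 0 \<and> f (ebas 3) 2 = 0 \<and> f (ebas 3) 3 = 0 \<and> f (ebas 3) 4 = 0 \<and> f (ebas 3) 5 = 0 \<and>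
         f (ebas 4) 1 = 0 \<and> f (ebas 4) 2 = 0 \<and> f (ebas 4) 3 = 0 \<and> f (ebas 4) 4 + f (ebas 4) 5 = 0 \<and>
         f (ebas 5) 1 = 0 \<and> f (ebas 5) 2 = 0 \<and> f (ebas 5) 3 = 0 \<and> f (ebas 5) 4 + f (ebas 5) 5 = 0"
proof -
  have r2: "2 * \<rho> \<noteq> 1" using r two by (auto simp: field_simps)
  have s2: "2 * \<sigma> \<noteq> 1" using s two by (auto simp: field_simps)
  have a2: "2 * \<alpha> \<noteq> 1" using a two by (auto simp: field_simps)
  have r2': "\<rho> * 2 \<noteq> 1" "\<sigma> * 2 \<noteq> 1" "\<alpha> * 2 \<noteq> 1" using r2 s2 a2 by (simp_all add: mult.commute)
  have d21: "f (ebas 1) 2 = 0" using deq[OF D, of 1 1 2] two r2 s2 a2 r2'  unfolding lv_mult_def sum15 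
    by (simp add: al7_def ebas_apply)
  have d12: "f (ebas 2) 1 = 0" using deq[OF D, of 2 2 1] two r2 s2 a2 r2'  unfolding lv_mult_def sum15 
    by (simp add: al7_def ebas_apply)
  have d32: "f (ebas 2) 3 = 0" using deq[OF D, of 2 2 3] two r2 s2 a2 r2'  unfolding lv_mult_def sum15 
    by (simp add: al7_def ebas_apply)
  have d23: "f (ebas 3) 2 = 0" using deq[OF D, of 3 3 2] two r2 s2 a2 r2'  unfolding lv_mult_def sum15 
    by (simp add: al7_def ebas_apply)
  have d43: "f (ebas 3) 4 = 0" using deq[OF D, of 3 3 4] two r2 s2 a2 r2'  unfolding lv_mult_def sum15 
    by (simp add: al7_def ebas_apply)
  have d34: "f (ebas 4) 3 = 0" using deq[OF D, of 4 4 3] two r2 s2 a2 r2'  unfolding lv_mult_def sum15 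
    by (simp add: al7_def ebas_apply)
  have d53: "f (ebas 3) 5 = 0" using deq[OF D, of 3 3 5] two r2 s2 a2 r2'  unfolding lv_mult_def sum15 
    by (simp add: al7_def ebas_apply)
  have d35: "f (ebas 5) 3 = 0" using deq[OF D, of 5 5 3] two r2 s2 a2 r2'  unfolding lv_mult_def sum15 
    by (simp add: al7_def ebas_apply)
  have d31: "f (ebas 1) 3 = 0" using deq[OF D, of 1 4 3] two r2 s2 a2 r2' d34 unfolding lv_mult_def sum15 
    by (simp add: al7_def ebas_apply add.commute)
  have d41: "f (ebas 1) 4 = 0" using deq[OF D, of 1 3 4] two r2 s2 a2 r2' d43 unfolding lv_mult_def sum15 
    by (simp add: al7_def ebas_apply)
  have d51: "f (ebas 1) 5 = 0" using deq[OF D, of 1 3 5] two r2 s2 a2 r2' d53 unfolding lv_mult_def sum15 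
    by (simp add: al7_def ebas_apply)
  have d42: "f (ebas 2) 4 = 0" using deq[OF D, of 2 1 4] two r2 s2 a2 r2' d41 unfolding lv_mult_def sum15 
    by (simp add: al7_def ebas_apply)
  have d52: "f (ebas 2) 5 = 0" using deq[OF D, of 2 1 5] two r2 s2 a2 r2' d51 unfolding lv_mult_def sum15 
    by (simp add: al7_def ebas_apply)
  have d14: "f (ebas 4) 1 = 0" using deq[OF D, of 2 4 1] two r2 s2 a2 r2' d12 unfolding lv_mult_def sum15 
    by (simp add: al7_def ebas_apply)
  have d15: "f (ebas 5) 1 = 0" using deq[OF D, of 2 5 1] two r2 s2 a2 r2' d12 unfolding lv_mult_def sum15 
    by (simp add: al7_def ebas_apply)
  have d13: "f (ebas 3) 1 = 0" using deq[OF D, of 3 4 1] two r2 s2 a2 r2' d14 unfolding lv_mult_def sum15 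
    by (simp add: al7_def ebas_apply)
  have d24: "f (ebas 4) 2 = 0" using deq[OF D, of 1 4 2] two r2 s2 a2 r2' d21 unfolding lv_mult_def sum15 
    by (simp add: al7_def ebas_apply)
  have d25: "f (ebas 5) 2 = 0" using deq[OF D, of 1 5 2] two r2 s2 a2 r2' d21 unfolding lv_mult_def sum15 
    by (simp add: al7_def ebas_apply)
  have d11: "f (ebas 1) 1 = 0" using deq[OF D, of 1 1 1] two r2 s2 a2 r2' d21 d31 d41 d51 unfolding lv_mult_def sum15 
    by (simp add: al7_def ebas_apply)
  have d22: "f (ebas 2) 2 = 0" using deq[OF D, of 2 2 2] two r2 s2 a2 r2' d12 d32 d42 d52 unfolding lv_mult_def sum15 
    by (simp add: al7_def ebas_apply)
  have d33: "f (ebas 3) 3 = 0" using deq[OF D, of 3 3 3] two r2 s2 a2 r2' d13 d23 d43 d53 unfolding lv_mult_def sum15 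
    by (simp add: al7_def ebas_apply)
  have d54: "f (ebas 4) 4 + f (ebas 4) 5 = 0" using deq[OF D, of 4 4 4] two d14 d24 d34 unfolding lv_mult_def sum15 
    by (simp add: al7_def ebas_apply add.commute)
  have d45: "f (ebas 5) 4 + f (ebas 5) 5 = 0" using deq[OF D, of 5 5 5] two d15 d25 d35 unfolding lv_mult_def sum15 
    by (simp add: al7_def ebas_apply add.commute)
  show ?thesis using d11 d12 d13 d14 d15 d21 d22 d23 d24 d25 d31 d32 d33 d34 d35 d41 d42 d43 d51 d52 d53 d54 d45 by simp
qed

lemma out_zero: "lin_map f \<Longrightarrow> v \<in> Vsp \<Longrightarrow> k \<notin> {1..5} \<Longrightarrow> f v k = 0"
  using lin_Vsp[of f v] by (auto simp: Vsp_def)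

lemma k_cases: "k \<in> {1..5::nat} \<Longrightarrow> k = 1 \<or> k = 2 \<or> k = 3 \<or> k = 4 \<or> k = 5" by auto

theorem mainTheorem7:
  fixes \<rho> \<sigma> \<alpha> :: "'a::field"
  assumes "(2::'a) \<noteq> 0"
    and "\<rho> \<noteq> 1/2" and "\<sigma> \<noteq> 1/2" and "\<alpha> \<noteq> 1/2"
  shows "{f. is_derivation (al7 \<rho> \<sigma> \<alpha>) f} =
         {f. lin_map f \<and> f (ebas 1) = (\<lambda>_. 0) \<and> f (ebas 2) = (\<lambda>_. 0) \<and> f (ebas 3) = (\<lambda>_. 0) \<and>
             (\<forall>v\<in>Vsp. \<exists>c. f v = (\<lambda>k. c * (ebas 4 k - ebas 5 k)))}"
proof (intro set_eqI iffI; simp only: mem_Collect_eq)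
  fix f :: "(nat \<Rightarrow> 'a) \<Rightarrow> nat \<Rightarrow> 'a" assume D: "is_derivation (al7 \<rho> \<sigma> \<alpha>) f"
  have L: "lin_map f" using D unfolding is_derivation_def by blast
  note F = der_facts[OF D assms]
  have n4: "f (ebas 4) 5 = - f (ebas 4) 4" using F by (metis add.commute eq_neg_iff_add_eq_0)
  have n5: "f (ebas 5) 5 = - f (ebas 5) 4" using F by (metis add.commute eq_neg_iff_add_eq_0)
  have z: "f (ebas i) = (\<lambda>_. 0)" if "i \<in> {1,2,3}" for i
  proof (rule ext)
    fix k
    have i: "i \<in> {1..5}" using that by auto
    show "f (ebas i) k = 0"
    proof (cases "k \<in> {1..5}")
      case True then show ?thesis using that F k_cases[OF True] by auto
    next
      case False then show ?thesis using out_zero[OF L ebas_Vsp[OF i]] by blast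
    qed
  qed
  have "\<exists>c. f v = (\<lambda>k. c * (ebas 4 k - ebas 5 k))" if v: "v \<in> Vsp" for v
  proof
    show "f v = (\<lambda>k. (v 4 * f (ebas 4) 4 + v 5 * f (ebas 5) 4) * (ebas 4 k - ebas 5 k))"
    proof (rule ext)
      fix k
      show "f v k = (v 4 * f (ebas 4) 4 + v 5 * f (ebas 5) 4) * (ebas 4 k - ebas 5 k)"
      proof (cases "k \<in> {1..5}")
        case True
        have "f v k = v 4 * f (ebas 4) k + v 5 * f (ebas 5) k"
          using lin_apply[OF L v] z[of 1] z[of 2] z[of 3] by (simp add: sum15 sum15')
        then show ?thesis using F n4 n5 k_cases[OF True] 
          by (auto simp: ebas_apply algebra_simps)
      next
        case False then show ?thesis using out_zero[OF L v] by (auto simp: ebas_apply)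
      qed
    qed
  qed
  then show "lin_map f \<and> f (ebas 1) = (\<lambda>_. 0) \<and> f (ebas 2) = (\<lambda>_. 0) \<and> f (ebas 3) = (\<lambda>_. 0) \<and>
             (\<forall>v\<in>Vsp. \<exists>c. f v = (\<lambda>k. c * (ebas 4 k - ebas 5 k)))" using L z by auto
next
  fix f :: "(nat \<Rightarrow> 'a) \<Rightarrow> nat \<Rightarrow> 'a" assume H: "lin_map f \<and> f (ebas 1) = (\<lambda>_. 0) \<and> f (ebas 2) = (\<lambda>_. 0) \<and> f (ebas 3) = (\<lambda>_. 0) \<and>
             (\<forall>v\<in>Vsp. \<exists>c. f v = (\<lambda>k. c * (ebas 4 k - ebas 5 k)))"
  have L: "lin_map f" using H by blast
  obtain c4 where c4: "f (ebas 4) = (\<lambda>k. c4 * (ebas 4 k - ebas 5 k))" using H ebas_Vsp[of 4] by force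
  obtain c5 where c5: "f (ebas 5) = (\<lambda>k. c5 * (ebas 4 k - ebas 5 k))" using H ebas_Vsp[of 5] by force
  have fw: "f w = (\<lambda>k. (w 4 * c4 + w 5 * c5) * (ebas 4 k - ebas 5 k))" if w: "w \<in> Vsp" for w
    using lin_apply[OF L w] H c4 c5 by (auto simp: sum15 sum15' algebra_simps)
  have "f (lv_mult (al7 \<rho> \<sigma> \<alpha>) u v) = (\<lambda>k. lv_mult (al7 \<rho> \<sigma> \<alpha>) (f u) v k + lv_mult (al7 \<rho> \<sigma> \<alpha>) u (f v) k)"
    if u: "u \<in> Vsp" and v: "v \<in> Vsp" for u v
    unfolding fw[OF u] fw[OF v] fw[OF lv_Vsp]
  proof (rule ext)
    fix k
    show "((lv_mult (al7 \<rho> \<sigma> \<alpha>) u v) 4 * c4 + (lv_mult (al7 \<rho> \<sigma> \<alpha>) u v) 5 * c5) * (ebas 4 k - ebas 5 k) =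
      lv_mult (al7 \<rho> \<sigma> \<alpha>) (\<lambda>k. (u 4 * c4 + u 5 * c5) * (ebas 4 k - ebas 5 k)) v k +
      lv_mult (al7 \<rho> \<sigma> \<alpha>) u (\<lambda>k. (v 4 * c4 + v 5 * c5) * (ebas 4 k - ebas 5 k)) k"
    proof (cases "k \<in> {1..5}")
      case True
      define h :: 'a where "h = 1/2"
      have h2: "2 * h = 1" using assms(1) by (simp add: h_def)
      have hh: "(1::'a)/2 = h" by (simp add: h_def)
      show ?thesis using k_cases[OF True] h2 unfolding lv_mult_def sum15
        apply (elim disjE)
        apply (simp_all add: al7_def ebas_apply hh)
        apply (simp_all add: algebra_simps)
        done
    next
      case False then show ?thesis by (auto simp: lv_mult_def ebas_apply)
    qed
  qed
  then show "is_derivation (al7 \<rho> \<sigma> \<alpha>) f" unfolding is_derivation_def using L by blast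
qed

end
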